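(* Assume $\ell\ll1$. There is an absolute constant $c>0$ and, for each $q>0$, a constant $c_q$ such that for $N$ sufficiently large, for all $\mathbf x\in\Lambda^N$, all $i$ and all $j\ne j'$ (both $\ne i$): $\|\tilde\chi_{ij}\tilde\chi_{ij'}F_{ij}^q\|_\infty\le e^{-cq/\ell^\varepsilon}$, and for every fixed $i$, $\sum_{j\ne i}\tilde\chi_{ij}F_{ij}^q\le c_q$.
   Context: $\Lambda=\mathbb R^3/\mathbb Z^3$ with torus distance $|x|$. $\ell=\ell(N)$ a length scale; $A\ll B$ means $A/B=O(N^{-\alpha})$ for some $\alpha>0$. $h(x)=\exp(-\sqrt{|x|^2+\ell^2}/\ell)$; fixed $0<\varepsilon<1/10$; $F(u)=e^{-u/\ell^\varepsilon}$; for $\mathbf x\in\Lambda^N$ and $i\ne j$, $F_{ij}=F\big(\sum_{k\ne i,j}[h(x_k-x_i)+h(x_k-x_j)]\big)$ and $\tilde\chi_{ij}=1(|x_i-x_j|\le\ell)$. *)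

theory Defs
  imports "HOL-Analysis.Analysis" "HOL-Library.Landau_Symbols"
begin

text \<open>Points of the torus R^3/Z^3 are represented by vectors in R^3; all quantities
below are Z^3-periodic. The torus norm |v| is the distance of v to the lattice Z^3.\<close>

definition lattice3 :: "(real ^ 3) set" where
  "lattice3 = {w. \<forall>i. w $ i \<in> \<int>}"

definition tnorm :: "real ^ 3 \<Rightarrow> real" where
  "tnorm v = infdist v lattice3"

definition hfun :: "real \<Rightarrow> real ^ 3 \<Rightarrow> real" where
  "hfun l v = exp (- sqrt ((tnorm v)\<^sup>2 + l\<^sup>2) / l)"

definition Ffun :: "real \<Rightarrow> real \<Rightarrow> real \<Rightarrow> real" where
  "Ffun l eps u = exp (- u / l powr eps)"

definition Fij :: "nat \<Rightarrow> real \<Rightarrow> real \<Rightarrow> (nat \<Rightarrow> real ^ 3) \<Rightarrow> nat \<Rightarrow> nat \<Rightarrow> real" where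
  "Fij N l eps x i j = Ffun l eps
     (\<Sum>k\<in>{0..<N} - {i, j}. hfun l (x k - x i) + hfun l (x k - x j))"

definition chi :: "real \<Rightarrow> (nat \<Rightarrow> real ^ 3) \<Rightarrow> nat \<Rightarrow> nat \<Rightarrow> real" where
  "chi l x i j = (if tnorm (x i - x j) \<le> l then 1 else 0)"

end

theory Submission
  imports Defs "HOL-Real_Asymp.Real_Asymp"
begin

lemma lattice3_neg: "uminus ` lattice3 = lattice3"
proof -
  have a: "- a \<in> lattice3" if "a \<in> lattice3" for a
    using that by (auto simp: lattice3_def)
  show ?thesis
  proof
    show "uminus ` lattice3 \<subseteq> lattice3" using a by auto
    show "lattice3 \<subseteq> uminus ` lattice3"
    proof
      fix a assume "a \<in> lattice3"
      then have "- a \<in> lattice3" by (rule a)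
      then show "a \<in> uminus ` lattice3" by (metis image_eqI minus_minus)
    qed
  qed
qed

lemma tnorm_neg: "tnorm (- v) = tnorm v"
proof -
  have ne: "lattice3 \<noteq> {}" by (auto simp: lattice3_def intro!: exI[of _ 0])
  have "tnorm (- v) = (INF a\<in>uminus ` lattice3. dist (- v) a)"
    unfolding tnorm_def using ne lattice3_neg by (simp add: infdist_notempty)
  also have "\<dots> = (INF a\<in>lattice3. dist (- v) (- a))"
    by (simp add: image_comp o_def)
  also have "\<dots> = (INF a\<in>lattice3. dist v a)"
    by (simp add: dist_norm norm_minus_commute) 
  also have "\<dots> = tnorm v" unfolding tnorm_def using ne by (simp add: infdist_notempty)
  finally show ?thesis .
qed

lemma tnorm_sym: "tnorm (a - b) = tnorm (b - a)"
  by (metis minus_diff_eq tnorm_neg)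

lemma hfun_nonneg: "0 \<le> hfun l v" by (simp add: hfun_def)

lemma hfun_lower:
  assumes "0 < l" "tnorm v \<le> l"
  shows "exp (-2) \<le> hfun l v"
proof -
  have t0: "0 \<le> tnorm v" by (simp add: tnorm_def infdist_nonneg)
  have "(tnorm v)\<^sup>2 \<le> l\<^sup>2" using assms t0 by (intro power_mono) auto
  then have "sqrt ((tnorm v)\<^sup>2 + l\<^sup>2) \<le> sqrt ((2*l)\<^sup>2)"
    by (intro real_sqrt_le_mono) (simp add: power_mult_distrib, smt (verit) zero_le_power2)
  also have "\<dots> = 2 * l" using assms by (intro real_sqrt_unique) auto
  finally have "sqrt ((tnorm v)\<^sup>2 + l\<^sup>2) / l \<le> 2" using assms by (simp add: divide_simps)
  then show ?thesis unfolding hfun_def by simp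
qed

lemma F_powr: "Ffun l eps u powr q = exp (- q * u / l powr eps)"
  unfolding Ffun_def powr_def by simp

lemma F_powr_le1:
  assumes "0 \<le> u" "0 < l" "0 < q"
  shows "Ffun l eps u powr q \<le> 1"
  unfolding F_powr using assms by (simp add: divide_nonpos_pos mult_nonneg_nonneg)

lemma Fij_powr_le1:
  assumes "0 < l" "0 < q"
  shows "Fij N l eps x i j powr q \<le> 1"
  unfolding Fij_def using assms by (intro F_powr_le1) (auto intro!: sum_nonneg add_nonneg_nonneg hfun_nonneg)

lemma Fij_nonneg: "0 \<le> Fij N l eps x i j powr q" by simp

lemma part1:
  assumes l: "0 < l" and q: "0 < q" and ij: "j \<noteq> i" "j' \<noteq> i" "j \<noteq> j'" "j' < N"
  shows "chi l x i j * chi l x i j' * Fij N l eps x i j powr q \<le> exp (- exp (-2) * q / l powr eps)"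
proof (cases "chi l x i j = 1 \<and> chi l x i j' = 1")
  case False
  then have "chi l x i j * chi l x i j' * Fij N l eps x i j powr q = 0" by (auto simp: chi_def split: if_splits)
  then show ?thesis by (metis exp_ge_zero)
next
  case True
  then have "tnorm (x j' - x i) \<le> l" by (auto simp: chi_def tnorm_sym split: if_splits)
  then have h: "exp (-2) \<le> hfun l (x j' - x i)" using hfun_lower l by blast
  define u where "u = (\<Sum>k\<in>{0..<N} - {i, j}. hfun l (x k - x i) + hfun l (x k - x j))"
  have "hfun l (x j' - x i) + hfun l (x j' - x j) \<le> u"
    unfolding u_def using ij
    by (intro member_le_sum[where f="\<lambda>k. hfun l (x k - x i) + hfun l (x k - x j)"])
       (auto intro!: add_nonneg_nonneg hfun_nonneg)
  then have u: "exp (-2) \<le> u" using h hfun_nonneg[of l "x j' - x j"] by linarith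
  have lp: "0 < l powr eps" using l by simp
  have "q * exp (-2) \<le> q * u" using u q by simp
  then have "- q * u / l powr eps \<le> - exp (-2) * q / l powr eps"
    using lp by (simp add: divide_simps mult.commute)
  then have "Fij N l eps x i j powr q \<le> exp (- exp (-2) * q / l powr eps)"
    unfolding Fij_def F_powr u_def[symmetric] by simp
  then show ?thesis using True by simp
qed

lemma asym:
  assumes "0 < b" "0 < a"
  shows "\<forall>\<^sub>F N in at_top. real N * exp (- b * real N powr a) \<le> 1"
proof -
  have "((\<lambda>N::nat. real N * exp (- b * real N powr a)) \<longlongrightarrow> 0) at_top"
    using assms by real_asymp
  then have "\<forall>\<^sub>F N in at_top. real N * exp (- b * real N powr a) < 1"
    by (rule order_tendstoD) simp
  then show ?thesis by eventually_elim simp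
qed

theorem lemmaB1:
  fixes ell :: "nat \<Rightarrow> real" and eps :: real
  assumes epsb: "0 < eps" "eps < 1/10"
    and lpos: "\<And>N. 0 < ell N"
    and lsmall: "\<exists>\<alpha>>0. ell \<in> O(\<lambda>N. real N powr (-\<alpha>))"
  shows "\<exists>c>0. \<forall>q>0. \<exists>cq. \<exists>N0. \<forall>N\<ge>N0. \<forall>x :: nat \<Rightarrow> real ^ 3.
           (\<forall>i<N. \<forall>j<N. \<forall>j'<N. j \<noteq> i \<longrightarrow> j' \<noteq> i \<longrightarrow> j \<noteq> j' \<longrightarrow>
              chi (ell N) x i j * chi (ell N) x i j' * Fij N (ell N) eps x i j powr q
                \<le> exp (- c * q / ell N powr eps)) \<and>
           (\<forall>i<N. (\<Sum>j\<in>{0..<N} - {i}. chi (ell N) x i j * Fij N (ell N) eps x i j powr q) \<le> cq)"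
proof (rule exI[of _ "exp (-2)"], intro conjI allI impI)
  show "0 < exp (-2::real)" by simp
  fix q :: real assume q: "0 < q"
  obtain \<alpha> where al: "\<alpha> > 0" and bo: "ell \<in> O(\<lambda>N. real N powr (-\<alpha>))" using lsmall by blast
  obtain K where K: "K > 0" and evK: "\<forall>\<^sub>F N in at_top. norm (ell N) \<le> K * norm (real N powr (-\<alpha>))"
    using bo by (elim landau_o.bigE) auto
  define b where "b = exp (-2) * q / K powr eps"
  have b: "0 < b" using q K by (simp add: b_def)
  have ev: "\<forall>\<^sub>F N in at_top. real N * exp (- exp (-2) * q / ell N powr eps) \<le> 1"
    using evK asym[OF b mult_pos_pos[OF al epsb(1)]] eventually_gt_at_top[of 0]
  proof eventually_elim
    case (elim N)
    have N: "real N > 0" using elim(3) by simp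
    have "ell N \<le> K * real N powr (-\<alpha>)" using elim(1) lpos[of N] N by simp
    then have "ell N powr eps \<le> (K * real N powr (-\<alpha>)) powr eps"
      using lpos[of N] epsb by (intro powr_mono2) auto
    also have "\<dots> = K powr eps * real N powr (-(\<alpha> * eps))"
      using K N by (simp add: powr_mult powr_powr)
    finally have le: "ell N powr eps \<le> K powr eps * real N powr (-(\<alpha> * eps))" .
    have lp: "0 < ell N powr eps" using lpos[of N] by simp
    have "b * real N powr (\<alpha> * eps) = exp (-2) * q / (K powr eps * real N powr (-(\<alpha> * eps)))"
      using K N by (simp add: b_def powr_minus divide_simps)
    also have "\<dots> \<le> exp (-2) * q / ell N powr eps"
      using le lp q K N by (intro divide_left_mono) (auto intro!: mult_pos_pos)
    finally have "exp (- exp (-2) * q / ell N powr eps) \<le> exp (- b * real N powr (\<alpha> * eps))"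
      by simp
    then have "real N * exp (- exp (-2) * q / ell N powr eps) \<le> real N * exp (- b * real N powr (\<alpha> * eps))"
      using N by (intro mult_left_mono) auto
    then show ?case using elim(2) by linarith
  qed
  then obtain N0 where N0: "\<And>N. N \<ge> N0 \<Longrightarrow> real N * exp (- exp (-2) * q / ell N powr eps) \<le> 1"
    by (auto simp: eventually_at_top_linorder)
  show "\<exists>cq N0. \<forall>N\<ge>N0. \<forall>x. (\<forall>i<N. \<forall>j<N. \<forall>j'<N. j \<noteq> i \<longrightarrow> j' \<noteq> i \<longrightarrow> j \<noteq> j' \<longrightarrow>
              chi (ell N) x i j * chi (ell N) x i j' * Fij N (ell N) eps x i j powr q
                \<le> exp (- exp (-2) * q / ell N powr eps)) \<and>
           (\<forall>i<N. (\<Sum>j\<in>{0..<N} - {i}. chi (ell N) x i j * Fij N (ell N) eps x i j powr q) \<le> cq)"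
  proof (intro exI[of _ "1::real"] exI[of _ N0] allI impI conjI)
    fix N x i j j' assume "N0 \<le> N" "i < N" "j < N" "j' < N" "j \<noteq> i" "j' \<noteq> i" "j \<noteq> j'"
    then show "chi (ell N) x i j * chi (ell N) x i j' * Fij N (ell N) eps x i j powr q
                \<le> exp (- exp (-2) * q / ell N powr eps)"
      using part1[OF lpos q] by blast
  next
    fix N x i assume N: "N0 \<le> N" and i: "i < N"
    define D where "D = {0..<N} - {i}"
    define t where "t j = chi (ell N) x i j * Fij N (ell N) eps x i j powr q" for j
    have t0: "0 \<le> t j" for j by (simp add: t_def chi_def)
    have t1: "t j \<le> chi (ell N) x i j" for j
      using Fij_powr_le1[OF lpos[of N] q, where N=N and eps=eps and x=x and i=i and j=j] by (simp add: t_def chi_def)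
    have fin: "finite D" by (simp add: D_def)
    have "sum t D \<le> 1"
    proof (cases "\<forall>j\<in>D. chi (ell N) x i j = 1 \<longrightarrow> (\<exists>j'\<in>D. j' \<noteq> j \<and> chi (ell N) x i j' = 1)")
      case True
      have "t j \<le> exp (- exp (-2) * q / ell N powr eps)" if j: "j \<in> D" for j
      proof (cases "chi (ell N) x i j = 1")
        case True': True
        then obtain j' where "j' \<in> D" "j' \<noteq> j" "chi (ell N) x i j' = 1" using True j by blast
        then show ?thesis using part1[OF lpos[of N] q, where j=j and j'=j' and i=i and N=N and x=x and eps=eps] True' j
          by (auto simp: D_def t_def)
      next
        case False
        then have "chi (ell N) x i j = 0" by (simp add: chi_def split: if_splits)
        then show ?thesis by (simp add: t_def)
      qed
      then have "sum t D \<le> of_nat (card D) * exp (- exp (-2) * q / ell N powr eps)"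
        using sum_bounded_above by metis
      also have "\<dots> \<le> real N * exp (- exp (-2) * q / ell N powr eps)"
        by (intro mult_right_mono) (auto simp: D_def intro: order.trans[OF card_mono[of "{0..<N}"]])
      also have "\<dots> \<le> 1" using N0[OF N] .
      finally show ?thesis .
    next
      case False
      then obtain j0 where j0: "j0 \<in> D" "chi (ell N) x i j0 = 1"
        and oth: "\<And>j'. j' \<in> D \<Longrightarrow> j' \<noteq> j0 \<Longrightarrow> chi (ell N) x i j' \<noteq> 1" by blast
      have "sum t D = t j0 + sum t (D - {j0})" using fin j0 by (simp add: sum.remove)
      also have "sum t (D - {j0}) = 0"
      proof (intro sum.neutral ballI)
        fix j assume "j \<in> D - {j0}"
        then have "chi (ell N) x i j \<noteq> 1" using oth by blast
        then have "chi (ell N) x i j = 0" by (simp add: chi_def split: if_splits)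
        then show "t j = 0" by (simp add: t_def)
      qed
      finally show ?thesis using t1[of j0] j0 by simp
    qed
    then show "(\<Sum>j\<in>{0..<N} - {i}. chi (ell N) x i j * Fij N (ell N) eps x i j powr q) \<le> 1"
      by (simp add: t_def D_def)
  qed
qed

end
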